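(* Let $(G,t)$ be an infinite biosphere. For every vertex $v\in G$ there exists an $\mathrm{IAP}\cap\mathrm{CONV}\cap\mathrm{CA}\cap\mathrm{REF}$-maximal set containing $v$; that is, a nonempty set $S$ of vertices of $G$ with $v\in S$ and $S\in \mathrm{IAP}\cap\mathrm{CONV}\cap\mathrm{CA}\cap\mathrm{REF}$, such that no proper superset of $S$ belongs to $\mathrm{IAP}\cap\mathrm{CONV}\cap\mathrm{CA}\cap\mathrm{REF}$.
   Context: An infinite biosphere is a directed graph $G$ together with a function $t$ assigning a real number $t(v)$ to each vertex, such that: (1) if $v$ is a parent of $w$ (edge from $v$ to $w$) then $t(v)<t(w)$; (2) for every $r\in\mathbb R$ at most finitely many vertices $v$ have $t(v)<r$; (3) every vertex has finitely many children; (4) $G$ is infinite. $v$ is an ancestor of $w$ (and $w$ a descendant of $v$) if there is a directed path $v=v_1,\dots,v_n=w$ with $n>1$. A $G$-subset is a set of vertices. $\mathrm{IAP}$: $G$-subsets $S$ such that no $v\in S$ has both infinitely many descendants in $S$ and infinitely many non-descendants in $S$. $\mathrm{CONV}$: $G$-subsets $S$ such that every $v\in G$ having an ancestor in $S$ and a descendant in $S$ lies in $S$. $\mathrm{CA}$: $G$-subsets $S$ for which there exists $v\in S$ such that every $w\in S$ with $w\neq v$ is a descendant of $v$. $\mathrm{REF}$: $G$-subsets $S$ such that every $v\in S$ with infinitely many descendants in $G$ has infinitely many descendants in $S$. *)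

theory Defs
  imports Complex_Main
begin

text \<open>A directed graph on vertex type 'v is given by its edge relation E
(E v w: there is an edge from v to w, i.e. v is a parent of w).
The vertex set of the graph is UNIV :: 'v set.\<close>

definition infinite_biosphere :: "('v \<Rightarrow> 'v \<Rightarrow> bool) \<Rightarrow> ('v \<Rightarrow> real) \<Rightarrow> bool" where
  "infinite_biosphere E t \<longleftrightarrow>
     (\<forall>v w. E v w \<longrightarrow> t v < t w) \<and>
     (\<forall>r::real. finite {v. t v < r}) \<and>
     (\<forall>v. finite {w. E v w}) \<and>
     infinite (UNIV :: 'v set)"

definition is_desc :: "('v \<Rightarrow> 'v \<Rightarrow> bool) \<Rightarrow> 'v \<Rightarrow> 'v \<Rightarrow> bool" where
  "is_desc E v w \<longleftrightarrow> (v, w) \<in> {(a, b). E a b}\<^sup>+"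

definition IAP :: "('v \<Rightarrow> 'v \<Rightarrow> bool) \<Rightarrow> 'v set \<Rightarrow> bool" where
  "IAP E S \<longleftrightarrow> \<not> (\<exists>v\<in>S. infinite {w\<in>S. is_desc E v w} \<and> infinite {w\<in>S. \<not> is_desc E v w})"

definition CONV :: "('v \<Rightarrow> 'v \<Rightarrow> bool) \<Rightarrow> 'v set \<Rightarrow> bool" where
  "CONV E S \<longleftrightarrow> (\<forall>v. (\<exists>a\<in>S. is_desc E a v) \<and> (\<exists>d\<in>S. is_desc E v d) \<longrightarrow> v \<in> S)"

definition CA :: "('v \<Rightarrow> 'v \<Rightarrow> bool) \<Rightarrow> 'v set \<Rightarrow> bool" where
  "CA E S \<longleftrightarrow> (\<exists>v\<in>S. \<forall>w\<in>S. w \<noteq> v \<longrightarrow> is_desc E v w)"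

definition REF :: "('v \<Rightarrow> 'v \<Rightarrow> bool) \<Rightarrow> 'v set \<Rightarrow> bool" where
  "REF E S \<longleftrightarrow> (\<forall>v\<in>S. infinite {w. is_desc E v w} \<longrightarrow> infinite {w\<in>S. is_desc E v w})"

definition good :: "('v \<Rightarrow> 'v \<Rightarrow> bool) \<Rightarrow> 'v set \<Rightarrow> bool" where
  "good E S \<longleftrightarrow> IAP E S \<and> CONV E S \<and> CA E S \<and> REF E S"

end

theory Submission
  imports Defs
begin

definition rhull :: "('v \<Rightarrow> 'v \<Rightarrow> bool) \<Rightarrow> 'v \<Rightarrow> (nat \<Rightarrow> 'v) \<Rightarrow> 'v set" where
  "rhull E v r = {y. (y = v \<or> is_desc E v y) \<and> (\<exists>k. y = r k \<or> is_desc E y (r k))}"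

definition famA :: "('v \<Rightarrow> 'v \<Rightarrow> bool) \<Rightarrow> 'v \<Rightarrow> 'v set set" where
  "famA E v = {S. v \<in> S \<and> CONV E S \<and> (\<forall>x\<in>S. infinite {w\<in>S. is_desc E x w})
      \<and> (\<forall>w\<in>S. w \<noteq> v \<longrightarrow> is_desc E v w)}"

lemma desc_trans: "is_desc E a b \<Longrightarrow> is_desc E b c \<Longrightarrow> is_desc E a c"
  unfolding is_desc_def by (meson trancl_trans)

lemma edge_desc: "E a b \<Longrightarrow> is_desc E a b"
  unfolding is_desc_def by auto

lemma desc_first: "is_desc E x y \<Longrightarrow> \<exists>c. E x c \<and> (c = y \<or> is_desc E c y)"
  unfolding is_desc_def
  by (erule converse_tranclE) auto

lemma first_exit:
  assumes "is_desc E r y" "r \<in> S" "y \<notin> S"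
  shows "\<exists>p b. p \<in> S \<and> b \<notin> S \<and> E p b \<and> (p = r \<or> is_desc E r p) \<and> (b = y \<or> is_desc E b y)"
  using assms unfolding is_desc_def
proof (induction rule: trancl_induct)
  case (base y) then show ?case by auto
next
  case (step y z)
  show ?case
  proof (cases "y \<in> S")
    case True then show ?thesis using step by auto
  next
    case False
    then obtain p b where pb: "p \<in> S" "b \<notin> S" "E p b" "p = r \<or> (r, p) \<in> {(a, b). E a b}\<^sup>+"
      and by': "b = y \<or> (b, y) \<in> {(a, b). E a b}\<^sup>+"
      using step by blast
    have bz: "(b, z) \<in> {(a, b). E a b}\<^sup>+"
    proof (cases "b = y")
      case True then show ?thesis using step(2) by (simp add: r_into_trancl')
    next
      case False
      then have "(b, y) \<in> {(a, b). E a b}\<^sup>+" using by' by simp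
      then show ?thesis using step(2) by (rule trancl_into_trancl)
    qed
    show ?thesis
      apply (rule exI[of _ p], rule exI[of _ b])
      using pb bz by simp
  qed
qed

lemma hull_sub:
  assumes "CONV E M" "v \<in> M" "\<And>k. r k \<in> M"
  shows "rhull E v r \<subseteq> M"
  using assms unfolding rhull_def CONV_def by blast

context
  fixes E :: "'v \<Rightarrow> 'v \<Rightarrow> bool" and t :: "'v \<Rightarrow> real"
  assumes bio: "infinite_biosphere E t"
begin

lemma edge_t: "E a b \<Longrightarrow> t a < t b"
  using bio unfolding infinite_biosphere_def by blast

lemma fin_children: "finite {c. E x c}"
  using bio unfolding infinite_biosphere_def by blast

lemma fin_below: "finite {a. t a < r}"
  using bio unfolding infinite_biosphere_def by blast

lemma desc_t: "is_desc E a b \<Longrightarrow> t a < t b"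
  unfolding is_desc_def
proof (induction rule: trancl_induct)
  case (base y) then show ?case using edge_t by auto
next
  case (step y z) then show ?case using edge_t by fastforce
qed

lemma desc_irrefl: "\<not> is_desc E a a" using desc_t by fastforce

lemma fin_anc: "finite {a. is_desc E a b}"
  by (rule finite_subset[OF _ fin_below[of "t b"]]) (auto dest: desc_t)

lemma ray_exists:
  assumes "P v0" "\<And>y. P y \<Longrightarrow> \<exists>c. E y c \<and> P c"
  shows "\<exists>r. r 0 = v0 \<and> (\<forall>k. E (r k) (r (Suc k)) \<and> P (r k))"
proof -
  define f where "f y = (SOME c. E y c \<and> P c)" for y
  have f: "E y (f y) \<and> P (f y)" if Py: "P y" for y
  proof -
    obtain c where "E y c \<and> P c" using assms(2)[OF Py] by blast
    then show ?thesis unfolding f_def by (rule someI)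
  qed
  define r where "r k = (f ^^ k) v0" for k
  have P: "P (r k)" for k
    by (induction k) (auto simp: r_def assms(1) f)
  have "E (r k) (r (Suc k))" for k
    using f[OF P[of k]] by (simp add: r_def)
  then show ?thesis using P by (intro exI[of _ r]) (auto simp: r_def)
qed

lemma ray_desc:
  assumes "\<forall>k. E (r k) (r (Suc k))"
  shows "k < m \<Longrightarrow> is_desc E (r k) (r m)"
proof (induction m)
  case 0 then show ?case by simp
next
  case (Suc m)
  then show ?case using assms edge_desc desc_trans by (metis less_Suc_eq)
qed

lemma ray_inj: assumes "\<forall>k. E (r k) (r (Suc k))" shows "inj r"
proof -
  have "strict_mono (t \<circ> r)" unfolding strict_mono_Suc_iff using assms edge_t by auto
  then have "inj (t \<circ> r)" by (rule strict_mono_imp_inj_on)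
  then show ?thesis using inj_on_imageI2 by blast
qed

lemma hull_in_A:
  assumes r0: "r 0 = v" and re: "\<forall>k. E (r k) (r (Suc k))"
  shows "rhull E v r \<in> famA E v"
proof -
  have rv: "r k = v \<or> is_desc E v (r k)" for k
    using ray_desc[OF re, of 0 k] r0 by (cases k) auto
  have rH: "r k \<in> rhull E v r" for k using rv unfolding rhull_def by auto
  have conv: "CONV E (rhull E v r)"
    unfolding CONV_def
  proof (intro allI impI)
    fix y assume "(\<exists>a\<in>rhull E v r. is_desc E a y) \<and> (\<exists>d\<in>rhull E v r. is_desc E y d)"
    then obtain a d where a: "a \<in> rhull E v r" "is_desc E a y" and d: "d \<in> rhull E v r" "is_desc E y d" by blast
    from a(1) have "a = v \<or> is_desc E v a" unfolding rhull_def by blast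
    then have "is_desc E v y" using a(2) desc_trans[of E v a y] by blast
    moreover from d obtain k where "d = r k \<or> is_desc E d (r k)" unfolding rhull_def by blast
    then have "is_desc E y (r k)" using d(2) desc_trans[of E y d "r k"] by blast
    ultimately show "y \<in> rhull E v r" unfolding rhull_def by blast
  qed
  have inf: "infinite {w\<in>rhull E v r. is_desc E x w}" if "x \<in> rhull E v r" for x
  proof -
    from that obtain k where k: "x = r k \<or> is_desc E x (r k)" unfolding rhull_def by blast
    have "r ` {Suc k..} \<subseteq> {w\<in>rhull E v r. is_desc E x w}"
    proof
      fix z assume "z \<in> r ` {Suc k..}"
      then obtain m where m0: "m \<in> {Suc k..}" "z = r m" by blast
      then have m: "m > k" "z = r m" by auto
      have "is_desc E (r k) (r m)" using ray_desc[OF re m(1)] .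
      then have "is_desc E x (r m)" using k desc_trans[of E x "r k" "r m"] by blast
      then show "z \<in> {w\<in>rhull E v r. is_desc E x w}" using rH m by blast
    qed
    moreover have "infinite (r ` {Suc k..})"
      using ray_inj[OF re] infinite_Ici by (metis finite_imageD inj_on_subset subset_UNIV)
    ultimately show ?thesis using finite_subset by blast
  qed
  show ?thesis unfolding famA_def using rH[of 0] r0 conv inf by (auto simp: rhull_def)
qed


lemma child_infinite:
  assumes "infinite {w. is_desc E y w}"
  shows "\<exists>c. E y c \<and> infinite {w. is_desc E c w}"
proof (rule ccontr)
  assume no: "\<not> (\<exists>c. E y c \<and> infinite {w. is_desc E c w})"
  have fin: "finite (insert c {w. is_desc E c w})" if yc: "E y c" for c
  proof -
    have "\<not> infinite {w. is_desc E c w}" using no yc by blast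
    then show ?thesis by simp
  qed
  have "{w. is_desc E y w} \<subseteq> (\<Union>c\<in>{c. E y c}. insert c {w. is_desc E c w})"
  proof
    fix w assume "w \<in> {w. is_desc E y w}"
    then have "is_desc E y w" by simp
    then obtain c where "E y c" "c = w \<or> is_desc E c w" using desc_first[of E y w] by blast
    then show "w \<in> (\<Union>c\<in>{c. E y c}. insert c {w. is_desc E c w})" by blast
  qed
  moreover have "finite (\<Union>c\<in>{c. E y c}. insert c {w. is_desc E c w})"
  proof (rule finite_UN_I[OF fin_children])
    fix c assume "c \<in> {c. E y c}"
    then have "E y c" by simp
    then show "finite (insert c {w. is_desc E c w})" by (rule fin)
  qed
  ultimately show False using assms finite_subset by blast
qed

lemma famA_ne:
  assumes "infinite {w. is_desc E v w}"
  shows "famA E v \<noteq> {}"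
proof -
  obtain r where r: "r 0 = v" "\<forall>k. E (r k) (r (Suc k)) \<and> infinite {w. is_desc E (r k) w}"
    using ray_exists[of "\<lambda>y. infinite {w. is_desc E y w}" v, OF assms child_infinite] by blast
  then show ?thesis using hull_in_A[of r v] by auto
qed

lemma chain_lower:
  assumes C: "C \<subseteq> famA E v" "C \<noteq> {}" and ch: "\<forall>S\<in>C. \<forall>S'\<in>C. S \<subseteq> S' \<or> S' \<subseteq> S"
  shows "\<exists>L\<in>famA E v. \<forall>S\<in>C. L \<subseteq> S"
proof -
  let ?P = "\<lambda>y. \<forall>S\<in>C. y \<in> S"
  have step: "\<exists>c. E y c \<and> ?P c" if Py: "?P y" for y
  proof -
    define CS where "CS S = {c. E y c \<and> c \<in> S}" for S
    have finCS: "finite (CS S)" for S unfolding CS_def using fin_children[of y] by (auto intro: finite_subset)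
    have neCS: "CS S \<noteq> {}" if SC: "S \<in> C" for S
    proof -
      have SA: "S \<in> famA E v" using SC C by blast
      have yS: "y \<in> S" using Py SC by blast
      then have "infinite {w\<in>S. is_desc E y w}" using SA unfolding famA_def by blast
      then have "{w\<in>S. is_desc E y w} \<noteq> {}" by (intro notI) simp
      then obtain w where "w \<in> {w\<in>S. is_desc E y w}" by (meson ex_in_conv)
      then have w: "w \<in> S" "is_desc E y w" by simp_all
      then obtain c where c: "E y c" "c = w \<or> is_desc E c w" using desc_first[OF w(2)] by blast
      have "c \<in> S"
      proof (cases "c = w")
        case True then show ?thesis using w by simp
      next
        case False
        then have "is_desc E c w" using c by simp
        moreover have "is_desc E y c" using edge_desc[of E, OF c(1)] .
        ultimately show ?thesis using SA yS w unfolding famA_def CONV_def by blast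
      qed
      then show ?thesis unfolding CS_def using c by blast
    qed
    obtain S1 where "S1 \<in> C" using C by blast
    obtain S0 where S0: "S0 \<in> C" "\<forall>S. S \<in> C \<longrightarrow> card (CS S0) \<le> card (CS S)"
      using ex_has_least_nat[of "\<lambda>S. S \<in> C" S1 "\<lambda>S. card (CS S)"] \<open>S1 \<in> C\<close> by blast
    have sub: "CS S0 \<subseteq> CS S" if SC: "S \<in> C" for S
    proof -
      from ch S0(1) SC have "S0 \<subseteq> S \<or> S \<subseteq> S0" by blast
      then show ?thesis
      proof
        assume "S0 \<subseteq> S" then show ?thesis unfolding CS_def by blast
      next
        assume "S \<subseteq> S0"
        then have "CS S \<subseteq> CS S0" unfolding CS_def by blast
        moreover have "card (CS S0) \<le> card (CS S)" using S0 SC by blast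
        ultimately have "CS S = CS S0" by (metis card_mono card_subset_eq finCS le_antisym)
        then show ?thesis by simp
      qed
    qed
    obtain c where "c \<in> CS S0" using neCS S0(1) by blast
    then show ?thesis using sub unfolding CS_def by blast
  qed
  have "?P v" using C unfolding famA_def by blast
  then obtain r where r: "r 0 = v" "\<forall>k. E (r k) (r (Suc k)) \<and> ?P (r k)"
    using ray_exists[of ?P v, OF \<open>?P v\<close> step] by blast
  have "rhull E v r \<in> famA E v" using hull_in_A r by blast
  moreover have "rhull E v r \<subseteq> S" if SC: "S \<in> C" for S
  proof (rule hull_sub)
    show "CONV E S" "v \<in> S" using SC C unfolding famA_def by blast+
    show "r k \<in> S" for k using r SC by blast
  qed
  ultimately show ?thesis by blast
qed

lemma famA_min:
  assumes ne: "famA E v \<noteq> {}"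
  shows "\<exists>M\<in>famA E v. \<forall>Y\<in>famA E v. Y \<subseteq> M \<longrightarrow> Y = M"
proof -
  let ?A = "uminus ` famA E v"
  have "\<exists>M\<in>?A. \<forall>X\<in>?A. M \<subseteq> X \<longrightarrow> X = M"
  proof (rule subset_Zorn)
    fix C' assume ch: "subset.chain ?A C'"
    then have chA: "C' \<subseteq> ?A" and chT: "\<forall>X\<in>C'. \<forall>Y\<in>C'. X \<subseteq> Y \<or> Y \<subseteq> X"
      unfolding subset_chain_def by simp_all
    show "\<exists>U\<in>?A. \<forall>X\<in>C'. X \<subseteq> U"
    proof (cases "C' = {}")
      case True
      obtain S0 where "S0 \<in> famA E v" using ne by (meson ex_in_conv)
      then have "- S0 \<in> ?A" by (rule imageI)
      then show ?thesis using True by (intro bexI[of _ "- S0"]) simp_all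
    next
      case False
      let ?C = "uminus ` C'"
      have c1: "?C \<subseteq> famA E v"
      proof
        fix S assume "S \<in> ?C"
        then obtain X where X: "X \<in> C'" "S = - X" by (rule imageE) simp
        have "X \<in> ?A" using chA X(1) by (rule subsetD)
        then obtain Y where "Y \<in> famA E v" "X = - Y" by (rule imageE) simp
        then show "S \<in> famA E v" using X by simp
      qed
      have c2: "?C \<noteq> {}" using False by simp
      have c3: "\<forall>S\<in>?C. \<forall>S'\<in>?C. S \<subseteq> S' \<or> S' \<subseteq> S"
      proof (intro ballI)
        fix S S' assume "S \<in> ?C" "S' \<in> ?C"
        then obtain X X' where "X \<in> C'" "S = - X" "X' \<in> C'" "S' = - X'" by (auto elim!: imageE)
        then show "S \<subseteq> S' \<or> S' \<subseteq> S" using chT by (metis Compl_subset_Compl_iff)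
      qed
      obtain L where L: "L \<in> famA E v" "\<forall>S\<in>?C. L \<subseteq> S" using chain_lower[OF c1 c2 c3] by (elim bexE) simp
      have "- L \<in> ?A" using L(1) by (rule imageI)
      moreover have "\<forall>X\<in>C'. X \<subseteq> - L"
      proof
        fix X assume "X \<in> C'"
        then have "L \<subseteq> - X" using L(2) by simp
        then show "X \<subseteq> - L" by auto
      qed
      ultimately show ?thesis by (rule bexI[rotated])
    qed
  qed
  then obtain M' where M': "M' \<in> ?A" "\<forall>X\<in>?A. M' \<subseteq> X \<longrightarrow> X = M'" by (elim bexE) simp
  then obtain M where M: "M \<in> famA E v" "M' = - M" by (elim imageE) simp
  show ?thesis
  proof (rule bexI[OF _ M(1)], intro ballI impI)
    fix Y assume Y: "Y \<in> famA E v" "Y \<subseteq> M"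
    then have "- Y \<in> ?A" by (intro imageI)
    moreover have "M' \<subseteq> - Y" using Y(2) M(2) by auto
    ultimately have "- Y = M'" using M'(2) Y(1) by simp
    then show "Y = M" using M(2) by simp
  qed
qed

lemma good_exists: "\<exists>S. v \<in> S \<and> good E S"
proof (cases "finite {w. is_desc E v w}")
  case True
  let ?S = "insert v {w. is_desc E v w}"
  have sub: "{w. is_desc E x w} \<subseteq> {w. is_desc E v w}" if xS: "x \<in> ?S" for x
  proof
    fix w assume "w \<in> {w. is_desc E x w}"
    then have "is_desc E x w" by simp
    then show "w \<in> {w. is_desc E v w}" using xS desc_trans[of E v x w] by auto
  qed
  have fx: "finite {w. is_desc E x w}" if "x \<in> ?S" for x
    using sub[OF that] True by (auto intro: finite_subset)
  have "IAP E ?S" unfolding IAP_def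
  proof
    assume "\<exists>x\<in>?S. infinite {w\<in>?S. is_desc E x w} \<and> infinite {w\<in>?S. \<not> is_desc E x w}"
    then obtain x where "x \<in> ?S" "infinite {w\<in>?S. is_desc E x w}" by blast
    then show False using fx[of x] by (metis (no_types, lifting) finite_subset mem_Collect_eq subsetI)
  qed
  moreover have "CONV E ?S" unfolding CONV_def
  proof (intro allI impI)
    fix y assume "(\<exists>a\<in>?S. is_desc E a y) \<and> (\<exists>d\<in>?S. is_desc E y d)"
    then obtain a where "a \<in> ?S" "is_desc E a y" by blast
    then show "y \<in> ?S" using desc_trans[of E v a y] by auto
  qed
  moreover have "CA E ?S" unfolding CA_def by blast
  moreover have "REF E ?S" unfolding REF_def using fx by blast
  ultimately show ?thesis unfolding good_def by blast
next
  case False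
  obtain M where MA: "M \<in> famA E v" and Mmin: "\<forall>Y\<in>famA E v. Y \<subseteq> M \<longrightarrow> Y = M"
    using famA_min famA_ne[OF False] by blast
  have Mroot: "\<forall>w\<in>M. w \<noteq> v \<longrightarrow> is_desc E v w" "v \<in> M" "CONV E M"
    and Minf: "\<forall>x\<in>M. infinite {w\<in>M. is_desc E x w}" using MA unfolding famA_def by auto
  have finN: "finite {w\<in>M. \<not> is_desc E x w}" if xM: "x \<in> M" for x
  proof (rule ccontr)
    let ?N = "{w\<in>M. \<not> is_desc E x w}"
    assume infN: "infinite ?N"
    let ?P = "\<lambda>y. y \<in> ?N \<and> infinite {w\<in>?N. is_desc E y w}"
    have Pv: "?P v"
    proof
      have "\<not> is_desc E x v"
      proof
        assume "is_desc E x v"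
        moreover have "x = v \<or> is_desc E v x" using Mroot xM by blast
        ultimately show False using desc_irrefl[of x] desc_trans[of E x v x] by blast
      qed
      then show "v \<in> ?N" using Mroot by blast
      have "?N - {v} \<subseteq> {w\<in>?N. is_desc E v w}" using Mroot by blast
      then show "infinite {w\<in>?N. is_desc E v w}" using infinite_remove[OF infN] finite_subset by blast
    qed
    have stepP: "\<exists>c. E y c \<and> ?P c" if Py: "?P y" for y
    proof (rule ccontr)
      assume no: "\<not> (\<exists>c. E y c \<and> ?P c)"
      have sub: "{w\<in>?N. is_desc E y w} \<subseteq> (\<Union>c\<in>{c. E y c \<and> c \<in> ?N}. insert c {w\<in>?N. is_desc E c w})"
      proof
        fix w assume w: "w \<in> {w\<in>?N. is_desc E y w}"
        then have "is_desc E y w" by simp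
        then obtain c where c: "E y c" "c = w \<or> is_desc E c w" using desc_first[of E y w] by blast
        have cM: "c \<in> M"
        proof (cases "c = w")
          case True then show ?thesis using w by blast
        next
          case False
          then have "is_desc E c w" using c by simp
          moreover have "is_desc E y c" using edge_desc[of E, OF c(1)] .
          ultimately show ?thesis using Mroot(3) Py w unfolding CONV_def by blast
        qed
        moreover have "\<not> is_desc E x c"
        proof
          assume "is_desc E x c"
          then have "is_desc E x w" using c(2) desc_trans[of E x c w] by blast
          then show False using w by blast
        qed
        ultimately show "w \<in> (\<Union>c\<in>{c. E y c \<and> c \<in> ?N}. insert c {w\<in>?N. is_desc E c w})"
          using c w by blast
      qed
      have "finite (\<Union>c\<in>{c. E y c \<and> c \<in> ?N}. insert c {w\<in>?N. is_desc E c w})"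
      proof (rule finite_UN_I)
        show "finite {c. E y c \<and> c \<in> ?N}" using fin_children[of y] by (auto intro: finite_subset)
        show "finite (insert c {w\<in>?N. is_desc E c w})" if "c \<in> {c. E y c \<and> c \<in> ?N}" for c
          using no that by blast
      qed
      then show False using sub Py finite_subset by blast
    qed
    obtain r where r: "r 0 = v" "\<forall>k. E (r k) (r (Suc k)) \<and> ?P (r k)"
      using ray_exists[of ?P v, OF Pv stepP] by blast
    have HA: "rhull E v r \<in> famA E v" using hull_in_A r by blast
    have "rhull E v r \<subseteq> M"
    proof (rule hull_sub)
      show "CONV E M" "v \<in> M" using Mroot by blast+
      show "r k \<in> M" for k using r by blast
    qed
    then have "rhull E v r = M" using Mmin HA by blast
    then obtain k where k: "x = r k \<or> is_desc E x (r k)" using xM unfolding rhull_def by blast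
    have "is_desc E (r k) (r (Suc k))" using r edge_desc[of E "r k" "r (Suc k)"] by blast
    then have "is_desc E x (r (Suc k))" using k desc_trans[of E x "r k" "r (Suc k)"] by blast
    then show False using r by blast
  qed
  have "IAP E M" unfolding IAP_def using finN by blast
  moreover have "CA E M" unfolding CA_def using Mroot by blast
  moreover have "REF E M" unfolding REF_def using Minf by blast
  ultimately show ?thesis unfolding good_def using Mroot by blast
qed


lemma chain_union_good:
  assumes CG: "\<forall>S\<in>C. v \<in> S \<and> good E S" and ne: "C \<noteq> {}"
    and ch: "\<forall>S\<in>C. \<forall>S'\<in>C. S \<subseteq> S' \<or> S' \<subseteq> S"
  shows "good E (\<Union>C)"
proof -
  let ?U = "\<Union>C"
  define isroot where "isroot S r \<longleftrightarrow> r \<in> S \<and> (\<forall>w\<in>S. w \<noteq> r \<longrightarrow> is_desc E r w)" for S r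
  have hasroot: "\<exists>r. isroot S r" if SC: "S \<in> C" for S
  proof -
    have "CA E S" using CG SC unfolding good_def by blast
    then show ?thesis unfolding CA_def isroot_def by blast
  qed
  have rootv: "r = v \<or> is_desc E r v" if SC: "S \<in> C" and rS: "isroot S r" for S r
  proof -
    have "v \<in> S" using CG SC by blast
    then show ?thesis using rS unfolding isroot_def by (cases "v = r") auto
  qed
  let ?R = "{r. \<exists>S\<in>C. isroot S r}"
  have finR: "finite ?R"
  proof (rule finite_subset)
    show "?R \<subseteq> insert v {a. is_desc E a v}"
    proof
      fix r assume "r \<in> ?R"
      then obtain S where "S \<in> C" "isroot S r" by blast
      then have "r = v \<or> is_desc E r v" by (rule rootv)
      then show "r \<in> insert v {a. is_desc E a v}" by blast
    qed
    show "finite (insert v {a. is_desc E a v})" using fin_anc by simp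
  qed
  have neR: "?R \<noteq> {}"
  proof -
    obtain S where SC: "S \<in> C" using ne by (meson ex_in_conv)
    then obtain r where "isroot S r" using hasroot by blast
    then have "r \<in> ?R" using SC by blast
    then show ?thesis by blast
  qed
  have "Min (t ` ?R) \<in> t ` ?R" using finR neR by (intro Min_in) simp_all
  then obtain r0 where "r0 \<in> ?R" and tr0: "t r0 = Min (t ` ?R)" by (elim imageE) simp
  then obtain S0 where S0: "S0 \<in> C" "isroot S0 r0" by blast
  have tmin: "t r0 \<le> t r" if "r \<in> ?R" for r
    unfolding tr0 using finR that by (intro Min_le) auto
  have rootS: "isroot S r0" if SC: "S \<in> C" "S0 \<subseteq> S" for S
  proof -
    obtain r where r: "isroot S r" using hasroot SC by blast
    have "r0 \<in> S" using S0 SC unfolding isroot_def by blast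
    have "r0 = r"
    proof (rule ccontr)
      assume "r0 \<noteq> r"
      then have "is_desc E r r0" using r \<open>r0 \<in> S\<close> unfolding isroot_def by blast
      then have "t r < t r0" by (rule desc_t)
      moreover have "t r0 \<le> t r" using tmin r SC by blast
      ultimately show False by simp
    qed
    then show ?thesis using r by simp
  qed
  have rootU: "isroot ?U r0"
    unfolding isroot_def
  proof
    show "r0 \<in> ?U" using S0 unfolding isroot_def by blast
    show "\<forall>w\<in>?U. w \<noteq> r0 \<longrightarrow> is_desc E r0 w"
    proof (intro ballI impI)
      fix w assume "w \<in> ?U" "w \<noteq> r0"
      then obtain S where S: "S \<in> C" "w \<in> S" by blast
      from ch S(1) S0(1) have "S \<subseteq> S0 \<or> S0 \<subseteq> S" by blast
      then show "is_desc E r0 w"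
      proof
        assume "S \<subseteq> S0" then show ?thesis using S0 S \<open>w \<noteq> r0\<close> unfolding isroot_def by blast
      next
        assume "S0 \<subseteq> S" then show ?thesis using rootS S \<open>w \<noteq> r0\<close> unfolding isroot_def by blast
      qed
    qed
  qed
  have convU: "CONV E ?U"
    unfolding CONV_def
  proof (intro allI impI)
    fix y assume "(\<exists>a\<in>?U. is_desc E a y) \<and> (\<exists>d\<in>?U. is_desc E y d)"
    then obtain a d S1 S2 where a: "a \<in> S1" "S1 \<in> C" "is_desc E a y" and d: "d \<in> S2" "S2 \<in> C" "is_desc E y d"
      by blast
    from ch a(2) d(2) have "S1 \<subseteq> S2 \<or> S2 \<subseteq> S1" by blast
    then show "y \<in> ?U"
    proof
      assume "S1 \<subseteq> S2"
      then have "y \<in> S2" using CG a d unfolding good_def CONV_def by blast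
      then show ?thesis using d by blast
    next
      assume "S2 \<subseteq> S1"
      then have "y \<in> S1" using CG a d unfolding good_def CONV_def by blast
      then show ?thesis using a by blast
    qed
  qed
  have refU: "REF E ?U"
    unfolding REF_def
  proof (intro ballI impI)
    fix x assume "x \<in> ?U" "infinite {w. is_desc E x w}"
    then obtain S where S: "S \<in> C" "x \<in> S" by blast
    then have "infinite {w\<in>S. is_desc E x w}" using CG \<open>infinite {w. is_desc E x w}\<close>
      unfolding good_def REF_def by blast
    moreover have "{w\<in>S. is_desc E x w} \<subseteq> {w\<in>?U. is_desc E x w}" using S by blast
    ultimately show "infinite {w\<in>?U. is_desc E x w}" using finite_subset by blast
  qed
  have caU: "CA E ?U" unfolding CA_def using rootU unfolding isroot_def by blast
  have iapU: "IAP E ?U"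
    unfolding IAP_def
  proof
    assume "\<exists>x\<in>?U. infinite {w\<in>?U. is_desc E x w} \<and> infinite {w\<in>?U. \<not> is_desc E x w}"
    then obtain x Sx where x: "x \<in> Sx" "Sx \<in> C" "infinite {w\<in>?U. is_desc E x w}"
      and infN: "infinite {w\<in>?U. \<not> is_desc E x w}" by blast
    obtain S where S: "S \<in> C" "Sx \<subseteq> S" "S0 \<subseteq> S"
    proof (cases "Sx \<subseteq> S0")
      case True then show ?thesis using that S0 by blast
    next
      case False then have "S0 \<subseteq> Sx" using ch x(2) S0(1) by blast
      then show ?thesis using that x by blast
    qed
    have goodS: "good E S" using CG S by blast
    have xS: "x \<in> S" using x S by blast
    have r0S: "r0 \<in> S" using S0 S unfolding isroot_def by blast
    have infG: "infinite {w. is_desc E x w}"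
      using x(3) by (metis (no_types, lifting) finite_subset mem_Collect_eq subsetI)
    then have infSx: "infinite {w\<in>S. is_desc E x w}" using goodS xS unfolding good_def REF_def by blast
    then have finF: "finite {w\<in>S. \<not> is_desc E x w}" using goodS xS unfolding good_def IAP_def by blast
    have claimA: "finite {w. is_desc E y w}" if yU: "y \<in> ?U" and yS: "y \<notin> S" for y
    proof (rule ccontr)
      assume infy: "infinite {w. is_desc E y w}"
      from yU obtain T where T: "T \<in> C" "y \<in> T" by blast
      have "S \<subseteq> T" using ch T S(1) yS by blast
      have gT: "good E T" using CG T by blast
      have "infinite {w\<in>T. is_desc E y w}" using gT T infy unfolding good_def REF_def by blast
      then have finT: "finite {w\<in>T. \<not> is_desc E y w}" using gT T unfolding good_def IAP_def by blast
      have "\<exists>z\<in>S. is_desc E y z"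
      proof (rule ccontr)
        assume "\<not> ?thesis"
        then have "{w\<in>S. is_desc E x w} \<subseteq> {w\<in>T. \<not> is_desc E y w}" using \<open>S \<subseteq> T\<close> by blast
        then show False using finT infSx finite_subset by blast
      qed
      then obtain z where z: "z \<in> S" "is_desc E y z" by blast
      have "y \<noteq> r0" using yS r0S by blast
      then have "is_desc E r0 y" using rootU yU unfolding isroot_def by blast
      then have "y \<in> S" using z r0S goodS unfolding good_def CONV_def by blast
      then show False using yS by blast
    qed
    let ?F = "{w\<in>S. \<not> is_desc E x w}"
    let ?B = "\<Union>p\<in>?F. \<Union>b\<in>{b. E p b \<and> finite {w. is_desc E b w}}. insert b {w. is_desc E b w}"
    have finB: "finite ?B"
    proof (rule finite_UN_I[OF finF])
      fix p
      show "finite (\<Union>b\<in>{b. E p b \<and> finite {w. is_desc E b w}}. insert b {w. is_desc E b w})"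
      proof (rule finite_UN_I)
        show "finite {b. E p b \<and> finite {w. is_desc E b w}}"
          using fin_children[of p] by (auto intro: finite_subset)
        show "finite (insert b {w. is_desc E b w})" if "b \<in> {b. E p b \<and> finite {w. is_desc E b w}}" for b
          using that by blast
      qed
    qed
    have "{w\<in>?U. \<not> is_desc E x w} - S \<subseteq> ?B"
    proof
      fix y assume y: "y \<in> {w\<in>?U. \<not> is_desc E x w} - S"
      then have "y \<noteq> r0" using r0S by blast
      then have ry: "is_desc E r0 y" using rootU y unfolding isroot_def by blast
      obtain p b where pb: "p \<in> S" "b \<notin> S" "E p b" "p = r0 \<or> is_desc E r0 p" "b = y \<or> is_desc E b y"
        using first_exit[OF ry r0S] y by blast
      have "is_desc E p b" using edge_desc[of E, OF pb(3)] .
      then have "is_desc E p y" using pb desc_trans[of E p b y] by blast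
      then have "\<not> is_desc E x p" using y desc_trans[of E x p y] by blast
      then have pF: "p \<in> ?F" using pb by blast
      have bU: "b \<in> ?U"
      proof (cases "b = y")
        case True then show ?thesis using y by blast
      next
        case False
        have "is_desc E p b" using edge_desc[of E, OF pb(3)] .
        then have "is_desc E r0 b" using pb desc_trans[of E r0 p b] by blast
        moreover have "is_desc E b y" using False pb by blast
        moreover have "r0 \<in> ?U" using rootU unfolding isroot_def by blast
        ultimately show ?thesis using convU y unfolding CONV_def by blast
      qed
      have "finite {w. is_desc E b w}" using claimA bU pb by blast
      then show "y \<in> ?B" using pF pb by blast
    qed
    then have "finite ({w\<in>?U. \<not> is_desc E x w} - S)" using finB finite_subset by blast
    moreover have "{w\<in>?U. \<not> is_desc E x w} \<subseteq> ({w\<in>?U. \<not> is_desc E x w} - S) \<union> ?F" by blast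
    ultimately show False using infN finF by (meson finite_Un finite_subset)
  qed
  show ?thesis unfolding good_def using iapU convU caU refU by blast
qed

end

theorem mainTheorem9:
  fixes E :: "'v \<Rightarrow> 'v \<Rightarrow> bool" and t :: "'v \<Rightarrow> real" and v :: 'v
  assumes "infinite_biosphere E t"
  shows "\<exists>S. S \<noteq> {} \<and> v \<in> S \<and> good E S \<and> (\<forall>T. S \<subset> T \<longrightarrow> \<not> good E T)"
proof -
  let ?G = "{S. v \<in> S \<and> good E S}"
  have "\<exists>M\<in>?G. \<forall>X\<in>?G. M \<subseteq> X \<longrightarrow> X = M"
  proof (rule subset_Zorn_nonempty)
    show "?G \<noteq> {}" using good_exists[OF assms, of v] by blast
    fix C assume "C \<noteq> {}" "subset.chain ?G C"
    then show "\<Union>C \<in> ?G" using chain_union_good[OF assms, of C v] unfolding subset_chain_def by blast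
  qed
  then obtain M where M: "v \<in> M" "good E M" "\<forall>X. v \<in> X \<and> good E X \<longrightarrow> M \<subseteq> X \<longrightarrow> X = M" by blast
  show ?thesis
  proof (intro exI conjI allI impI)
    show "M \<noteq> {}" "v \<in> M" "good E M" using M by auto
    fix T assume "M \<subset> T"
    then show "\<not> good E T" using M by blast
  qed
qed

end
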